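(* Let $m>0$, let $k$ be a nonzero integer and $\lambda\le 0$. Let $\gamma$ be the maximal solution of the initial value problem $$\gamma'(r)+\gamma(r)^2=-\frac{1}{4r^2}+\frac{k^2}{r^2}-\frac{m}{r^3}\Big(1+\frac{m}{2r}\Big)^{-2}-\lambda\Big(1+\frac{m}{2r}\Big)^4,\qquad \gamma(m/2)=m^{-1}.$$ Then $\gamma$ is defined and finite on all of $[m/2,\infty)$; in particular, for no $R>m/2$ does one have $\lim_{r\to R^-}\gamma(r)=-\infty$. Equivalently, for every $R>m/2$ there is no nonzero solution $v$ of $v''+v\big(\frac{1}{4r^2}-\frac{k^2}{r^2}+\frac{m}{r^3}(1+\frac{m}{2r})^{-2}+\lambda(1+\frac{m}{2r})^4\big)=0$ on $[m/2,R]$ with $v'(m/2)=m^{-1}v(m/2)$ and $v(R)=0$. *)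

theory Defs
  imports "HOL-Analysis.Analysis"
begin

text \<open>The potential
  Q(r) = 1/(4 r^2) - k^2/r^2 + (m/r^3) (1 + m/(2r))^(-2) + lambda (1 + m/(2r))^4,
  so that the Riccati equation reads  gamma' + gamma^2 = - Q  and the
  Jacobi equation reads  v'' + v Q = 0.\<close>
definition potQ :: "real \<Rightarrow> int \<Rightarrow> real \<Rightarrow> real \<Rightarrow> real" where
  "potQ m k lam r =
     1 / (4 * r^2) - (real_of_int k)^2 / r^2
     + m / r^3 * inverse ((1 + m / (2 * r))^2)
     + lam * (1 + m / (2 * r))^4"

end

theory Submission
  imports Defs
begin


lemma potQ_neg:
  fixes m lam r :: real and k :: int
  assumes "m > 0" "k \<noteq> 0" "lam \<le> 0" "r > 0"
  shows "potQ m k lam r < 0"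
proof -
  define p where "p = 1 + m / (2 * r)"
  have p0: "p > 0" using assms by (simp add: p_def pos_add_strict)
  have "0 < k^2" using assms(2) by simp
  then have "1 \<le> k^2" by linarith
  then have "1 \<le> real_of_int (k^2)" by (metis of_int_1_le_iff)
  then have k1: "(real_of_int k)^2 \<ge> 1" by (metis of_int_power)
  have rp: "r * p^2 \<ge> 2 * m"
  proof -
    have "r * p^2 = (2*r+m)^2 / (4*r)" using assms by (simp add: p_def field_simps power2_eq_square)
    moreover have "(2*r+m)^2 - 8*m*r = (2*r-m)^2" by (simp add: power2_eq_square algebra_simps)
    then have "(2*r+m)^2 \<ge> 8*m*r" using zero_le_power2[of "2*r-m"] by linarith
    moreover have "8*m*r/(4*r) \<le> (2*r+m)^2/(4*r)"
      by (rule divide_right_mono) (use assms calculation in auto)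
    ultimately have "r * p^2 \<ge> 8*m*r/(4*r)" by simp
    moreover have "8*m*r/(4*r) = 2*m" using assms by simp
    ultimately show ?thesis by simp
  qed
  have t3: "m / r^3 * inverse (p^2) \<le> 1 / (2*r^2)"
  proof -
    have "m / r^3 * inverse (p^2) = m / (r^2 * (r * p^2))" using assms p0 by (simp add: field_simps power3_eq_cube power2_eq_square)
    also have "\<dots> \<le> m / (r^2 * (2*m))" using assms rp by (intro divide_left_mono mult_left_mono) auto
    also have "\<dots> = 1 / (2*r^2)" using assms by simp
    finally show ?thesis .
  qed
  have t4: "lam * p^4 \<le> 0" using assms by (simp add: mult_nonpos_nonneg)
  have t2: "(real_of_int k)^2 / r^2 \<ge> 1 / r^2" using k1 assms by (simp add: divide_right_mono)
  have "potQ m k lam r \<le> 1/(4*r^2) - 1/r^2 + 1/(2*r^2)"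
    unfolding potQ_def p_def[symmetric] using t2 t3 t4 by linarith
  also have "\<dots> < 0" using assms by (simp add: field_simps)
  finally show ?thesis .
qed

lemma potQ_cont:
  assumes "m > 0"
  shows "continuous_on {m/2..} (potQ m k lam)"
proof -
  have "r \<noteq> 0 \<and> (1 + m/(2*r))^2 \<noteq> 0" if "r \<in> {m/2..}" for r
  proof -
    from that have r: "r > 0" "m/(2*r) > 0" using assms by auto
    then show "r \<noteq> 0 \<and> (1 + m/(2*r))^2 \<noteq> 0" by auto
  qed
  then show ?thesis unfolding potQ_def[abs_def]
    by (intro continuous_intros) (auto simp: power_eq_0_iff)
qed

lemma int_bound:
  fixes g :: "real \<Rightarrow> real"
  assumes "continuous_on {a..r} g" "a \<le> r" "\<And>s. s \<in> {a..r} \<Longrightarrow> \<bar>g s\<bar> \<le> D*(s-a)^n"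
  shows "\<bar>integral {a..r} g\<bar> \<le> D*(r-a)^(Suc n) / real (Suc n)"
proof -
  have dd: "((\<lambda>s. D*(s-a)^(Suc n)/real (Suc n)) has_real_derivative D*(x-a)^n) (at x within X)" for x X
  proof -
    have "((\<lambda>s. D*(s-a)^(Suc n)/real (Suc n)) has_real_derivative D*(real (Suc n) * (x-a)^n * 1)/real (Suc n)) (at x within X)"
      by (intro derivative_eq_intros DERIV_power_Suc) auto
    then show ?thesis by simp
  qed
  have hi: "((\<lambda>s. D*(s-a)^n) has_integral (D*(r-a)^(Suc n)/real (Suc n) - D*(a-a)^(Suc n)/real (Suc n))) {a..r}"
    by (rule fundamental_theorem_of_calculus[OF assms(2)])
       (use dd in \<open>auto simp: has_real_derivative_iff_has_vector_derivative[symmetric]\<close>)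
  have "norm (integral {a..r} g) \<le> integral {a..r} (\<lambda>s. D*(s-a)^n)"
    using assms hi by (intro integral_norm_bound_integral integrable_continuous_real) (auto simp: has_integral_integrable intro!: continuous_intros)
  also have "\<dots> = D*(r-a)^(Suc n) / real (Suc n)" using integral_unique[OF hi] by simp
  finally show ?thesis by simp
qed


fun itv :: "(real\<Rightarrow>real) \<Rightarrow> real \<Rightarrow> real \<Rightarrow> real \<Rightarrow> nat \<Rightarrow> (real\<Rightarrow>real)\<times>(real\<Rightarrow>real)" where
  "itv q a y0 y1 0 = (\<lambda>_. y0, \<lambda>_. y1)"
| "itv q a y0 y1 (Suc n) = (\<lambda>r. integral {a..r} (snd (itv q a y0 y1 n)),
     \<lambda>r. - integral {a..r} (\<lambda>s. q s * fst (itv q a y0 y1 n) s))"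

lemma itv_cont:
  assumes "continuous_on {a..b} q"
  shows "continuous_on {a..b} (fst (itv q a y0 y1 n)) \<and> continuous_on {a..b} (snd (itv q a y0 y1 n))"
proof (induction n)
  case 0 then show ?case by simp
next
  case (Suc n)
  have c2: "continuous_on {a..b} (\<lambda>s. q s * fst (itv q a y0 y1 n) s)"
    using Suc assms by (intro continuous_intros) auto
  have "continuous_on {a..b} (\<lambda>r. integral {a..r} (snd (itv q a y0 y1 n)))"
    by (rule DERIV_continuous_on, rule integral_has_real_derivative) (use Suc in auto)
  moreover have "continuous_on {a..b} (\<lambda>r. integral {a..r} (\<lambda>s. q s * fst (itv q a y0 y1 n) s))"
    by (rule DERIV_continuous_on, rule integral_has_real_derivative[OF c2])
  then have "continuous_on {a..b} (\<lambda>r. - integral {a..r} (\<lambda>s. q s * fst (itv q a y0 y1 n) s))"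
    by (intro continuous_intros)
  ultimately show ?case by simp
qed

lemma itv_deriv:
  assumes "continuous_on {a..b} q" "r \<in> {a..b}"
  shows "(fst (itv q a y0 y1 (Suc n)) has_real_derivative snd (itv q a y0 y1 n) r) (at r within {a..b})"
    and "(snd (itv q a y0 y1 (Suc n)) has_real_derivative -(q r * fst (itv q a y0 y1 n) r)) (at r within {a..b})"
proof -
  note c = itv_cont[OF assms(1), of y0 y1 n]
  show "(fst (itv q a y0 y1 (Suc n)) has_real_derivative snd (itv q a y0 y1 n) r) (at r within {a..b})"
    using integral_has_real_derivative[OF conjunct2[OF c] assms(2)] by simp
  have c2: "continuous_on {a..b} (\<lambda>s. q s * fst (itv q a y0 y1 n) s)"
    using c assms by (intro continuous_intros) auto
  show "(snd (itv q a y0 y1 (Suc n)) has_real_derivative -(q r * fst (itv q a y0 y1 n) r)) (at r within {a..b})"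
    using DERIV_minus[OF integral_has_real_derivative[OF c2 assms(2)]] by simp
qed

lemma itv_bound:
  assumes "continuous_on {a..b} q" "\<And>s. s \<in> {a..b} \<Longrightarrow> \<bar>q s\<bar> \<le> K" "K \<ge> 1"
    "\<bar>y0\<bar> \<le> C" "\<bar>y1\<bar> \<le> C"
  shows "\<forall>r\<in>{a..b}. \<bar>fst (itv q a y0 y1 n) r\<bar> \<le> C*K^n*(r-a)^n/fact n \<and>
            \<bar>snd (itv q a y0 y1 n) r\<bar> \<le> C*K^n*(r-a)^n/fact n"
proof (induction n)
  case 0 then show ?case using assms by simp
next
  case (Suc n)
  note c = itv_cont[OF assms(1), of y0 y1 n]
  have C0: "C \<ge> 0" using assms(4) by linarith
  show ?case
  proof
    fix r assume r: "r \<in> {a..b}"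
    have sub: "{a..r} \<subseteq> {a..b}" using r by auto
    have e: "C*K^n/fact n*(r-a)^(Suc n)/real (Suc n) = C*K^n*(r-a)^(Suc n)/fact (Suc n)"
      by (simp add: fact_Suc field_simps)
    have "\<bar>fst (itv q a y0 y1 (Suc n)) r\<bar> \<le> C*K^n/fact n*(r-a)^(Suc n)/real (Suc n)"
      unfolding itv.simps fst_conv using Suc r by (intro int_bound continuous_on_subset[OF conjunct2[OF c] sub]) auto
    also have "\<dots> = C*K^n*(r-a)^(Suc n)/fact (Suc n)" by (rule e)
    also have "\<dots> \<le> C*K^(Suc n)*(r-a)^(Suc n)/fact (Suc n)"
      using assms(3) C0 r by (intro divide_right_mono mult_right_mono mult_left_mono) (auto simp: power_increasing)
    finally have f1: "\<bar>fst (itv q a y0 y1 (Suc n)) r\<bar> \<le> C*K^(Suc n)*(r-a)^(Suc n)/fact (Suc n)" .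
    have c2: "continuous_on {a..r} (\<lambda>s. q s * fst (itv q a y0 y1 n) s)"
      using c assms sub by (intro continuous_intros continuous_on_subset[OF assms(1)] continuous_on_subset[OF conjunct1[OF c]]) auto
    have bq: "\<bar>q s * fst (itv q a y0 y1 n) s\<bar> \<le> (K*C*K^n/fact n)*(s-a)^n" if s: "s \<in> {a..r}" for s
    proof -
      have "\<bar>q s * fst (itv q a y0 y1 n) s\<bar> = \<bar>q s\<bar> * \<bar>fst (itv q a y0 y1 n) s\<bar>" by (simp add: abs_mult)
      also have "\<dots> \<le> K * (C*K^n*(s-a)^n/fact n)"
        using Suc s sub assms(2)[of s] by (intro mult_mono) auto
      finally show ?thesis by simp
    qed
    have "\<bar>snd (itv q a y0 y1 (Suc n)) r\<bar> \<le> (K*C*K^n/fact n)*(r-a)^(Suc n)/real (Suc n)"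
      unfolding itv.simps snd_conv abs_minus_cancel using r bq by (intro int_bound c2) auto
    also have "\<dots> = C*K^(Suc n)*(r-a)^(Suc n)/fact (Suc n)"
      by (simp add: fact_Suc field_simps)
    finally show "\<bar>fst (itv q a y0 y1 (Suc n)) r\<bar> \<le> C*K^(Suc n)*(r-a)^(Suc n)/fact (Suc n) \<and>
            \<bar>snd (itv q a y0 y1 (Suc n)) r\<bar> \<le> C*K^(Suc n)*(r-a)^(Suc n)/fact (Suc n)" using f1 by simp
  qed
qed


lemma lin_ode_loc:
  fixes q :: "real \<Rightarrow> real"
  assumes cqb: "continuous_on {a..b} q" and ab: "a \<le> b"
  shows "\<forall>r\<in>{a..b}. ((\<lambda>r. \<Sum>n. fst (itv q a y0 y1 n) r) has_real_derivative (\<Sum>n. snd (itv q a y0 y1 n) r)) (at r within {a..b})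
     \<and> ((\<lambda>r. \<Sum>n. snd (itv q a y0 y1 n) r) has_real_derivative -(q r * (\<Sum>n. fst (itv q a y0 y1 n) r))) (at r within {a..b})"
proof -
  define u where "u n = fst (itv q a y0 y1 n)" for n
  define z where "z n = snd (itv q a y0 y1 n)" for n
  define U where "U r = (\<Sum>n. u n r)" for r
  define W where "W r = (\<Sum>n. z n r)" for r
  obtain K0 where K0: "\<forall>s\<in>{a..b}. norm (q s) \<le> K0"
    using compact_imp_bounded[OF compact_continuous_image[OF cqb compact_Icc]]
    unfolding bounded_iff by auto
  define K where "K = max 1 K0"
  define C where "C = max \<bar>y0\<bar> \<bar>y1\<bar>"
  define B where "B n = C*(K*(b-a))^n/fact n" for n
  have K1: "K \<ge> 1" and Kq: "\<And>s. s \<in> {a..b} \<Longrightarrow> \<bar>q s\<bar> \<le> K" using K0 by (auto simp: K_def le_max_iff_disj)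
  have C0: "C \<ge> 0" by (simp add: C_def)
  have sB: "summable B"
  proof -
    have "B = (\<lambda>n. C * (inverse (fact n) * (K*(b-a))^n))" by (auto simp: B_def field_simps fun_eq_iff)
    then show ?thesis using summable_exp[of "K*(b-a)"] by (simp add: summable_mult)
  qed
  have bd: "\<bar>u n r\<bar> \<le> B n \<and> \<bar>z n r\<bar> \<le> B n" if r: "r \<in> {a..b}" for n r
  proof -
    have ib: "\<bar>u n r\<bar> \<le> C*K^n*(r-a)^n/fact n \<and> \<bar>z n r\<bar> \<le> C*K^n*(r-a)^n/fact n"
      using itv_bound[OF cqb Kq K1, of y0 C y1 n] r by (auto simp: C_def u_def z_def)
    have "C*K^n*(r-a)^n/fact n \<le> C*K^n*(b-a)^n/fact n"
      using r C0 K1 by (intro divide_right_mono mult_left_mono power_mono) auto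
    also have "\<dots> = B n" by (simp add: B_def power_mult_distrib)
    finally show ?thesis using ib by linarith
  qed
  have sumu: "summable (\<lambda>n. u n r)" and sumz: "summable (\<lambda>n. z n r)" if "r \<in> {a..b}" for r
    using bd[OF that] by (auto intro!: summable_comparison_test'[OF sB])
  define du where "du n r = (case n of 0 \<Rightarrow> 0 | Suc j \<Rightarrow> z j r)" for n r
  define dz where "dz n r = (case n of 0 \<Rightarrow> 0 | Suc j \<Rightarrow> -(q r * u j r))" for n r
  define B' where "B' n = (case n of 0 \<Rightarrow> 0 | Suc j \<Rightarrow> B j)" for n
  have sB': "summable B'" using sB by (subst summable_Suc_iff[symmetric]) (simp add: B'_def)
  have sKB': "summable (\<lambda>n. K * B' n)" using sB' by (simp add: summable_mult)
  have du_d: "(u n has_real_derivative du n r) (at r within {a..b})" if "r \<in> {a..b}" for n r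
    using itv_deriv[OF cqb that] by (cases n) (auto simp: u_def z_def du_def)
  have dz_d: "(z n has_real_derivative dz n r) (at r within {a..b})" if "r \<in> {a..b}" for n r
    using itv_deriv[OF cqb that] by (cases n) (auto simp: u_def z_def dz_def)
  have udu: "uniform_limit {a..b} (\<lambda>n x. \<Sum>i<n. du i x) (\<lambda>x. \<Sum>i. du i x) sequentially"
    by (rule Weierstrass_m_test[OF _ sB']) (use bd in \<open>auto simp: du_def B'_def split: nat.splits\<close>)
  have udz: "uniform_limit {a..b} (\<lambda>n x. \<Sum>i<n. dz i x) (\<lambda>x. \<Sum>i. dz i x) sequentially"
  proof (rule Weierstrass_m_test[OF _ sKB'])
    fix n x assume x: "x \<in> {a..b}"
    show "norm (dz n x) \<le> K * B' n"
    proof (cases n)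
      case 0 then show ?thesis by (simp add: dz_def B'_def)
    next
      case (Suc j)
      have "\<bar>q x * u j x\<bar> \<le> K * B j" unfolding abs_mult
        using bd[OF x, of j] Kq[OF x] by (intro mult_mono) auto
      then show ?thesis by (simp add: Suc dz_def B'_def)
    qed
  qed
  have a_in: "a \<in> {a..b}" using ab by simp
  obtain g where g: "\<forall>x\<in>{a..b}. (\<lambda>n. u n x) sums g x \<and> (g has_field_derivative (\<Sum>i. du i x)) (at x within {a..b})"
    using has_field_derivative_series[OF convex_real_interval(5) du_d udu a_in sumu[OF a_in]] by blast
  obtain h where h: "\<forall>x\<in>{a..b}. (\<lambda>n. z n x) sums h x \<and> (h has_field_derivative (\<Sum>i. dz i x)) (at x within {a..b})"
    using has_field_derivative_series[OF convex_real_interval(5) dz_d udz a_in sumz[OF a_in]] by blast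
  show ?thesis
  proof
    fix r assume r: "r \<in> {a..b}"
    have gU: "g x = U x" if "x \<in> {a..b}" for x using g that by (auto simp: U_def sums_iff)
    have hW: "h x = W x" if "x \<in> {a..b}" for x using h that by (auto simp: W_def sums_iff)
    have e1: "(\<Sum>i. du i r) = W r"
    proof -
      have "(\<lambda>n. du (Suc n) r) sums W r" using sumz[OF r] by (simp add: du_def W_def summable_sums)
      then have "(\<lambda>n. du n r) sums (W r + du 0 r)" by (rule sums_Suc)
      then show ?thesis by (simp add: sums_iff du_def)
    qed
    have e2: "(\<Sum>i. dz i r) = -(q r * U r)"
    proof -
      have "(\<lambda>n. u n r) sums U r" using sumu[OF r] by (simp add: U_def summable_sums)
      then have "(\<lambda>n. dz (Suc n) r) sums (-(q r * U r))" by (simp add: dz_def sums_minus sums_mult)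
      then have "(\<lambda>n. dz n r) sums (-(q r * U r) + dz 0 r)" by (rule sums_Suc)
      then show ?thesis by (simp add: sums_iff dz_def)
    qed
    have d1: "(U has_real_derivative W r) (at r within {a..b})"
      using g r e1 gU unfolding has_field_derivative_def
      by (metis has_derivative_transform)
    have d2: "(W has_real_derivative -(q r * U r)) (at r within {a..b})"
      using h r e2 hW unfolding has_field_derivative_def
      by (metis has_derivative_transform)
    show "((\<lambda>r. \<Sum>n. fst (itv q a y0 y1 n) r) has_real_derivative (\<Sum>n. snd (itv q a y0 y1 n) r)) (at r within {a..b})
     \<and> ((\<lambda>r. \<Sum>n. snd (itv q a y0 y1 n) r) has_real_derivative -(q r * (\<Sum>n. fst (itv q a y0 y1 n) r))) (at r within {a..b})"
      using d1 d2 unfolding U_def[abs_def] W_def[abs_def] u_def z_def by simp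
  qed
qed


lemma lin_ode_exists:
  fixes q :: "real \<Rightarrow> real"
  assumes cq: "continuous_on {a..} q"
  shows "\<exists>v w. v a = y0 \<and> w a = y1 \<and> (\<forall>r\<ge>a. (v has_real_derivative w r) (at r within {a..}) \<and>
            (w has_real_derivative -(q r * v r)) (at r within {a..}))"
proof -
  define U where "U r = (\<Sum>n. fst (itv q a y0 y1 n) r)" for r
  define W where "W r = (\<Sum>n. snd (itv q a y0 y1 n) r)" for r
  have "(\<lambda>n. fst (itv q a y0 y1 (Suc n)) a) sums 0" by simp
  then have "(\<lambda>n. fst (itv q a y0 y1 n) a) sums (0 + fst (itv q a y0 y1 0) a)" by (rule sums_Suc)
  then have Ua: "U a = y0" by (simp add: U_def sums_iff)
  have "(\<lambda>n. snd (itv q a y0 y1 (Suc n)) a) sums 0" by simp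
  then have "(\<lambda>n. snd (itv q a y0 y1 n) a) sums (0 + snd (itv q a y0 y1 0) a)" by (rule sums_Suc)
  then have Wa: "W a = y1" by (simp add: W_def sums_iff)
  have "(U has_real_derivative W r) (at r within {a..}) \<and> (W has_real_derivative -(q r * U r)) (at r within {a..})"
    if r: "r \<ge> a" for r
  proof -
    have cqb: "continuous_on {a..r+1} q" using cq by (rule continuous_on_subset) auto
    have L: "(U has_real_derivative W r) (at r within {a..r+1}) \<and> (W has_real_derivative -(q r * U r)) (at r within {a..r+1})"
      using lin_ode_loc[OF cqb, of y0 y1] r unfolding U_def[abs_def] W_def[abs_def] by auto
    have "at r within {a..r+1} = at r within {a..}"
    proof (cases "r = a")
      case True then show ?thesis using at_within_Icc_at_right[of a "a+1"] at_within_Ici_at_right[of a] by simp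
    next
      case False
      then have "a < r" using r by simp
      then have "at r within {a..r+1} = at r" by (intro at_within_Icc_at) auto
      moreover have "at r within {a..} = at r" using \<open>a < r\<close>
        by (intro at_within_open_subset[where S="{a<..}"]) auto
      ultimately show ?thesis by simp
    qed
    then show ?thesis using L by simp
  qed
  then show ?thesis using Ua Wa by blast
qed

lemma mono_deriv:
  fixes f f' :: "real \<Rightarrow> real"
  assumes "\<And>x. x \<in> {a..b} \<Longrightarrow> (f has_real_derivative f' x) (at x within {a..b})"
    "\<And>x. x \<in> {a..b} \<Longrightarrow> f' x \<ge> 0" "a \<le> x" "x \<le> y" "y \<le> b"
  shows "f x \<le> f y"
proof (rule DERIV_nonneg_imp_increasing_open[OF assms(4)])
  fix z assume z: "x < z" "z < y"
  then have "at z within {a..b} = at z" using assms by (intro at_within_Icc_at) auto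
  then show "\<exists>d. (f has_real_derivative d) (at z) \<and> 0 \<le> d" using assms(1,2)[of z] z assms by auto
next
  have "continuous_on {a..b} f" by (rule DERIV_continuous_on[OF assms(1)])
  then show "continuous_on {x..y} f" by (rule continuous_on_subset) (use assms in auto)
qed

theorem mainTheorem4:
  fixes m lam :: real and k :: int
  assumes "m > 0" and "k \<noteq> 0" and "lam \<le> 0"
  shows "(\<exists>\<gamma> :: real \<Rightarrow> real.
            \<gamma> (m / 2) = 1 / m \<and>
            (\<forall>r \<in> {m / 2 ..}.
               (\<gamma> has_real_derivative (- ((\<gamma> r)^2) - potQ m k lam r)) (at r within {m / 2 ..})))
       \<and> (\<forall>R > m / 2. \<forall>(v :: real \<Rightarrow> real) (v' :: real \<Rightarrow> real).
            (\<forall>r \<in> {m / 2 .. R}.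
               (v has_real_derivative v' r) (at r within {m / 2 .. R}) \<and>
               (v' has_real_derivative (- v r * potQ m k lam r)) (at r within {m / 2 .. R})) \<and>
            v' (m / 2) = v (m / 2) / m \<and> v R = 0
            \<longrightarrow> (\<forall>r \<in> {m / 2 .. R}. v r = 0))"
proof
  define a where "a = m/2"
  define Q where "Q = potQ m k lam"
  have Qneg: "Q r < 0" if "r \<ge> a" for r
    using potQ_neg[OF assms, of r] that assms by (simp add: Q_def a_def)
  obtain v w where vw: "v a = 1" "w a = 1/m"
    "\<And>r. r \<ge> a \<Longrightarrow> (v has_real_derivative w r) (at r within {a..}) \<and> (w has_real_derivative -(Q r * v r)) (at r within {a..})"
    using lin_ode_exists[OF potQ_cont[OF assms(1), of k lam], of 1 "1/m"] unfolding Q_def a_def by blast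
  define p where "p r = v r * w r" for r
  have pd: "(p has_real_derivative (v r * (-(Q r * v r)) + w r * w r)) (at r within {a..})" if "r \<ge> a" for r
    unfolding p_def[abs_def] by (rule DERIV_mult'[OF conjunct1[OF vw(3)[OF that]] conjunct2[OF vw(3)[OF that]]])
  have pnn: "v r * (-(Q r * v r)) + w r * w r \<ge> 0" if "r \<ge> a" for r
  proof -
    have "v r * (-(Q r * v r)) = (-Q r) * (v r * v r)" by simp
    also have "\<dots> \<ge> 0" by (rule mult_nonneg_nonneg[OF _ zero_le_square]) (use Qneg[OF that] in linarith)
    finally show ?thesis using zero_le_square[of "w r"] by linarith
  qed
  have ppos: "p r > 0" if r: "r \<ge> a" for r
  proof -
    have "p a \<le> p r"
      by (rule mono_deriv[of a r p, OF DERIV_subset[OF pd]]) (use r pnn in auto)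
    moreover have "p a > 0" using vw assms by (simp add: p_def)
    ultimately show ?thesis by simp
  qed
  have vnz: "v r \<noteq> 0" if "r \<ge> a" for r using ppos[OF that] by (auto simp: p_def)
  show "\<exists>\<gamma> :: real \<Rightarrow> real. \<gamma> (m / 2) = 1 / m \<and>
            (\<forall>r \<in> {m / 2 ..}. (\<gamma> has_real_derivative (- ((\<gamma> r)^2) - potQ m k lam r)) (at r within {m / 2 ..}))"
  proof (intro exI[of _ "\<lambda>r. w r / v r"] conjI ballI)
    show "w (m/2) / v (m/2) = 1/m" using vw by (simp add: a_def)
  next
    fix r assume "r \<in> {m/2..}"
    then have r: "r \<ge> a" by (simp add: a_def)
    have "((\<lambda>r. w r / v r) has_real_derivative ((-(Q r * v r)) * v r - w r * w r) / (v r * v r)) (at r within {a..})"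
      using vw(3)[OF r] vnz[OF r] by (intro DERIV_divide) auto
    moreover have "((-(Q r * v r)) * v r - w r * w r) / (v r * v r) = - ((w r / v r)^2) - Q r"
      using vnz[OF r] by (simp add: field_simps power2_eq_square)
    ultimately show "((\<lambda>r. w r / v r) has_real_derivative - ((w r / v r)^2) - potQ m k lam r) (at r within {m/2..})"
      by (simp add: Q_def a_def)
  qed
next
  define a where "a = m/2"
  define Q where "Q = potQ m k lam"
  have Qneg: "Q r < 0" if "r \<ge> a" for r
    using potQ_neg[OF assms, of r] that assms by (simp add: Q_def a_def)
  show "\<forall>R > m / 2. \<forall>(v :: real \<Rightarrow> real) (v' :: real \<Rightarrow> real).
            (\<forall>r \<in> {m / 2 .. R}.
               (v has_real_derivative v' r) (at r within {m / 2 .. R}) \<and>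
               (v' has_real_derivative (- v r * potQ m k lam r)) (at r within {m / 2 .. R})) \<and>
            v' (m / 2) = v (m / 2) / m \<and> v R = 0
            \<longrightarrow> (\<forall>r \<in> {m / 2 .. R}. v r = 0)"
  proof (intro allI impI)
    fix R v v' assume R: "R > m/2"
      and H: "(\<forall>r \<in> {m / 2 .. R}.
               (v has_real_derivative v' r) (at r within {m / 2 .. R}) \<and>
               (v' has_real_derivative (- v r * potQ m k lam r)) (at r within {m / 2 .. R})) \<and>
            v' (m / 2) = v (m / 2) / m \<and> v R = 0"
    have aR: "a < R" using R by (simp add: a_def)
    have D: "(v has_real_derivative v' r) (at r within {a..R}) \<and> (v' has_real_derivative (- v r * Q r)) (at r within {a..R})"
      if "r \<in> {a..R}" for r using H that by (simp add: a_def Q_def)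
    define p where "p r = v r * v' r" for r
    define p' where "p' r = v r * (- v r * Q r) + v' r * v' r" for r
    have pd: "(p has_real_derivative p' r) (at r within {a..R})" if "r \<in> {a..R}" for r
      unfolding p_def[abs_def] p'_def by (rule DERIV_mult'[OF conjunct1[OF D[OF that]] conjunct2[OF D[OF that]]])
    have pnn: "p' r \<ge> 0" if "r \<in> {a..R}" for r
    proof -
      have "v r * (- v r * Q r) = (-Q r) * (v r * v r)" by simp
      also have "\<dots> \<ge> 0" by (rule mult_nonneg_nonneg[OF _ zero_le_square]) (use Qneg[of r] that in auto)
      finally show ?thesis unfolding p'_def using zero_le_square[of "v' r"] by linarith
    qed
    have mono: "p x \<le> p y" if "a \<le> x" "x \<le> y" "y \<le> R" for x y
      by (rule mono_deriv[OF pd pnn that])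
    have pR: "p R = 0" using H by (simp add: p_def)
    have pa: "p a = v a * v a / m" using H by (simp add: p_def a_def)
    have "v a * v a \<ge> 0" by simp
    then have pa0: "p a \<ge> 0" using pa assms by simp
    have p0: "p r = 0" if "r \<in> {a..R}" for r
      using mono[of a r] mono[of r R] that pR pa0 by auto
    have va: "v a = 0" using p0[of a] pa aR assms by simp
    show "\<forall>r \<in> {m / 2 .. R}. v r = 0"
    proof
      fix r assume "r \<in> {m/2..R}"
      then have r: "r \<in> {a..R}" by (simp add: a_def)
      show "v r = 0"
      proof (cases "r = a \<or> r = R")
        case True then show ?thesis using va H by (auto simp: a_def)
      next
        case False
        then have r2: "a < r" "r < R" using r by auto
        have "at r within {a..R} = at r" using r2 by (intro at_within_Icc_at) auto
        then have d1: "(p has_real_derivative p' r) (at r)" using pd[OF r] by simp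
        have "((\<lambda>_. 0) has_real_derivative p' r) (at r)"
          by (rule has_field_derivative_transform_within_open[OF d1, of "{a<..<R}"]) (use r2 p0 in auto)
        then have "p' r = 0" using DERIV_const DERIV_unique by blast
        moreover have "v' r * v' r \<ge> 0" by simp
        moreover have "(-Q r) * (v r * v r) \<ge> 0" by (rule mult_nonneg_nonneg[OF _ zero_le_square]) (use Qneg[of r] r in auto)
        moreover have "p' r = v' r * v' r + (-Q r) * (v r * v r)" by (simp add: p'_def algebra_simps)
        ultimately have "(-Q r) * (v r * v r) = 0" by linarith
        then show ?thesis using Qneg[of r] r by simp
      qed
    qed
  qed
qed

end
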